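(* Let $C$ be an $m\times n$ maximal configuration resistant to predators, with $m\ge 2$. If row $m-1$ (the penultimate row) contains exactly $r$ occupied lots, then every row $i$ with $1\le i\le m-2$ contains at most $r+1$ occupied lots.
   Context: An $m\times n$ configuration is a $0$-$1$ matrix $C=(C_{i,j})$, $1\le i\le m$, $1\le j\le n$; $C_{i,j}=1$ means lot $(i,j)$ is occupied by a house. Row $1$ is the northernmost and row $m$ the southernmost; column $1$ is westernmost and column $n$ easternmost. A house at $(i,j)$ is blocked from sunlight if the three lots $(i,j-1)$, $(i,j+1)$, $(i+1,j)$ all lie inside the grid and are all occupied (lots outside the grid never obstruct sunlight). $C$ is permissible if no house is blocked, and maximal if it is permissible and setting any single empty lot to $1$ yields a non-permissible configuration. A maximal configuration is resistant to predators if, for every empty lot, putting a house on it (alone) results in that new house being blocked. *)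

theory Defs
  imports Main
begin

text \<open>An m x n configuration is modelled as C :: nat => nat => bool, where C i j means
  lot (i,j) is occupied; only the values with 1 <= i <= m, 1 <= j <= n are relevant.\<close>

definition in_grid :: "nat \<Rightarrow> nat \<Rightarrow> nat \<Rightarrow> nat \<Rightarrow> bool" where
  "in_grid m n i j \<longleftrightarrow> 1 \<le> i \<and> i \<le> m \<and> 1 \<le> j \<and> j \<le> n"

definition blocked :: "nat \<Rightarrow> nat \<Rightarrow> (nat \<Rightarrow> nat \<Rightarrow> bool) \<Rightarrow> nat \<Rightarrow> nat \<Rightarrow> bool" where
  "blocked m n C i j \<longleftrightarrow>
     in_grid m n i (j - 1) \<and> j \<ge> 2 \<and> in_grid m n i (j + 1) \<and> in_grid m n (i + 1) j \<and>
     C i (j - 1) \<and> C i (j + 1) \<and> C (i + 1) j"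

definition permissible :: "nat \<Rightarrow> nat \<Rightarrow> (nat \<Rightarrow> nat \<Rightarrow> bool) \<Rightarrow> bool" where
  "permissible m n C \<longleftrightarrow> (\<forall>i j. in_grid m n i j \<and> C i j \<longrightarrow> \<not> blocked m n C i j)"

definition add_house :: "(nat \<Rightarrow> nat \<Rightarrow> bool) \<Rightarrow> nat \<Rightarrow> nat \<Rightarrow> (nat \<Rightarrow> nat \<Rightarrow> bool)" where
  "add_house C i j = (\<lambda>a b. if a = i \<and> b = j then True else C a b)"

definition maximal :: "nat \<Rightarrow> nat \<Rightarrow> (nat \<Rightarrow> nat \<Rightarrow> bool) \<Rightarrow> bool" where
  "maximal m n C \<longleftrightarrow> permissible m n C \<and>
     (\<forall>i j. in_grid m n i j \<and> \<not> C i j \<longrightarrow> \<not> permissible m n (add_house C i j))"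

definition resistant :: "nat \<Rightarrow> nat \<Rightarrow> (nat \<Rightarrow> nat \<Rightarrow> bool) \<Rightarrow> bool" where
  "resistant m n C \<longleftrightarrow> maximal m n C \<and>
     (\<forall>i j. in_grid m n i j \<and> \<not> C i j \<longrightarrow> blocked m n (add_house C i j) i j)"

definition row_count :: "nat \<Rightarrow> (nat \<Rightarrow> nat \<Rightarrow> bool) \<Rightarrow> nat \<Rightarrow> nat" where
  "row_count n C i = card {j \<in> {1..n}. C i j}"

end

theory Submission
  imports Defs
begin

lemma count_gap:
  fixes Z Z' :: "nat set"
  assumes fZ: "finite Z" and fZ': "finite Z'" and ne: "Z' \<noteq> {}"
  and gap: "\<And>j k. j\<in>Z' \<Longrightarrow> k\<in>Z' \<Longrightarrow> j<k \<Longrightarrow> \<exists>x\<in>Z. j<x \<and> x<k"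
  and A: "a \<Longrightarrow> \<forall>j\<in>Z'. \<exists>x\<in>Z. x<j"
  and B: "b \<Longrightarrow> \<forall>j\<in>Z'. \<exists>x\<in>Z. j<x"
  shows "card Z' + (if a then 1 else 0) + (if b then 1 else 0) \<le> card Z + 1"
proof -
  define f where "f j = card {x\<in>Z. x<j}" for j
  have mono: "f j < f k" if jk: "j\<in>Z'" "k\<in>Z'" "j<k" for j k
  proof -
    obtain y where y: "y\<in>Z" "j<y" "y<k" using gap jk by blast
    have sub: "{x\<in>Z. x<j} \<subseteq> {x\<in>Z. x<k}" using jk(3) by auto
    have "y \<in> {x\<in>Z. x<k}" "y \<notin> {x\<in>Z. x<j}" using y by auto
    then have ps: "{x\<in>Z. x<j} \<subset> {x\<in>Z. x<k}" using sub by blast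
    have fin: "finite {x\<in>Z. x<k}" using fZ by auto
    have "card {x\<in>Z. x<j} < card {x\<in>Z. x<k}" using psubset_card_mono[OF fin ps] .
    then show ?thesis unfolding f_def .
  qed
  have inj: "inj_on f Z'"
  proof (rule inj_onI)
    fix j k assume "j\<in>Z'" "k\<in>Z'" "f j = f k"
    then show "j = k" using mono[of j k] mono[of k j] by (metis less_irrefl linorder_neqE_nat)
  qed
  define lo where "lo = (if a then 1 else 0::nat)"
  define hi where "hi = card Z - (if b then 1 else 0::nat)"
  have img: "f ` Z' \<subseteq> {lo..hi}"
  proof
    fix y assume "y \<in> f ` Z'"
    then obtain j where j: "j\<in>Z'" "y = f j" by auto
    have le: "f j \<le> card Z" unfolding f_def using fZ by (intro card_mono) auto
    have "lo \<le> f j"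
    proof (cases a)
      case True
      then obtain x where "x\<in>Z" "x<j" using A j by blast
      then have "{x\<in>Z. x<j} \<noteq> {}" by auto
      moreover have "finite {x\<in>Z. x<j}" using fZ by auto
      ultimately show ?thesis unfolding lo_def f_def using True by (simp add: card_gt_0_iff Suc_le_eq)
    qed (simp add: lo_def)
    moreover have "f j \<le> hi"
    proof (cases b)
      case True
      then obtain x where x: "x\<in>Z" "j<x" using B j by blast
      then have "{x\<in>Z. x<j} \<subseteq> Z - {x}" by auto
      then have "f j \<le> card (Z - {x})" unfolding f_def using fZ by (intro card_mono) auto
      then show ?thesis unfolding hi_def using True x fZ by simp
    qed (simp add: hi_def le)
    ultimately show "y \<in> {lo..hi}" using j by simp
  qed
  obtain j0 where j0: "j0 \<in> Z'" using ne by auto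
  have lohi: "lo \<le> hi" using img j0 by force
  have "card Z' = card (f ` Z')" using inj by (simp add: card_image)
  also have "\<dots> \<le> card {lo..hi}" using img by (intro card_mono) auto
  also have "\<dots> = hi + 1 - lo" by simp
  finally have "card Z' \<le> hi + 1 - lo" .
  moreover have "b \<Longrightarrow> card Z \<ge> 1"
  proof -
    assume b
    then obtain x where "x \<in> Z" using B j0 by blast
    then show ?thesis using fZ by (simp add: Suc_le_eq card_gt_0_iff) blast
  qed
  ultimately show ?thesis using lohi unfolding lo_def hi_def by (auto split: if_splits)
qed

definition Zs :: "nat \<Rightarrow> (nat \<Rightarrow> nat \<Rightarrow> bool) \<Rightarrow> nat \<Rightarrow> nat set" where
  "Zs n C i = {j\<in>{1..n}. \<not> C i j}"

definition phi :: "nat \<Rightarrow> (nat \<Rightarrow> nat \<Rightarrow> bool) \<Rightarrow> nat \<Rightarrow> nat" where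
  "phi n C i = card (Zs n C i) + (if C i 2 \<and> C i (n - 1) then 1 else 0)"

lemma F1:
  assumes "resistant m n C" "1 \<le> i" "i \<le> m" "1 \<le> j" "j \<le> n" "\<not> C i j"
  shows "2 \<le> j \<and> j + 1 \<le> n \<and> i + 1 \<le> m \<and> C i (j - 1) \<and> C i (j + 1) \<and> C (i + 1) j"
proof -
  have "blocked m n (add_house C i j) i j"
    using assms unfolding resistant_def in_grid_def by blast
  then show ?thesis unfolding blocked_def add_house_def in_grid_def by (auto split: if_splits)
qed

lemma F2:
  assumes "resistant m n C" "1 \<le> i" "i + 1 \<le> m" "2 \<le> j" "j + 1 \<le> n"
    "C i (j - 1)" "C i j" "C i (j + 1)"
  shows "\<not> C (i + 1) j"
proof
  assume "C (i + 1) j"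
  have "permissible m n C" using assms(1) unfolding resistant_def maximal_def by blast
  then have "\<not> blocked m n C i j" using assms unfolding permissible_def in_grid_def by auto
  then show False using assms \<open>C (i + 1) j\<close> unfolding blocked_def in_grid_def by auto
qed

lemma step:
  assumes R: "resistant m n C" and i: "1 \<le> i" "i + 1 \<le> m" and n3: "3 \<le> n"
  shows "phi n C (i + 1) \<le> phi n C i"
proof -
  define Z where "Z = Zs n C i"
  define Z' where "Z' = Zs n C (i + 1)"
  have fZ: "finite Z" "finite Z'" unfolding Z_def Z'_def Zs_def by auto
  have inZ: "x \<in> Z \<longleftrightarrow> 1 \<le> x \<and> x \<le> n \<and> \<not> C i x" for x unfolding Z_def Zs_def by auto
  have inZ': "x \<in> Z' \<longleftrightarrow> 1 \<le> x \<and> x \<le> n \<and> \<not> C (i+1) x" for x unfolding Z'_def Zs_def by auto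
  have z': "2 \<le> j \<and> j + 1 \<le> n \<and> C (i+1) (j-1) \<and> C (i+1) (j+1) \<and> C i j" if "j \<in> Z'" for j
  proof -
    have a: "1 \<le> j" "j \<le> n" "\<not> C (i+1) j" using that inZ' by auto
    have b: "2 \<le> j \<and> j + 1 \<le> n \<and> C (i+1) (j-1) \<and> C (i+1) (j+1)"
      using F1[OF R _ _ a] i by auto
    have "C i j"
    proof (rule ccontr)
      assume "\<not> C i j"
      then have "C (i+1) j" using F1[OF R i(1) _ a(1,2)] i by auto
      then show False using a by simp
    qed
    then show ?thesis using b by simp
  qed
  have Ci: "C i x" if "1 \<le> x" "x \<le> n" "x \<notin> Z" for x using that inZ by auto
  have gap: "\<exists>x\<in>Z. j<x \<and> x<k" if jk: "j\<in>Z'" "k\<in>Z'" "j<k" for j k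
  proof (rule ccontr)
    assume no: "\<not> (\<exists>x\<in>Z. j<x \<and> x<k)"
    have zj: "2 \<le> j \<and> j + 1 \<le> n \<and> C (i+1) (j-1) \<and> C (i+1) (j+1) \<and> C i j" using z' jk by blast
    have zk: "2 \<le> k \<and> k + 1 \<le> n \<and> C (i+1) (k-1) \<and> C (i+1) (k+1) \<and> C i k" using z' jk by blast
    show False
    proof (cases "k = j + 1")
      case True
      then show ?thesis using zj jk(2) inZ' by auto
    next
      case False
      then have k2: "j + 2 \<le> k" using jk by auto
      have "j + 1 \<notin> Z" using no k2 by auto
      then have c1: "C i (j+1)" using Ci[of "j+1"] k2 zk by auto
      have c2: "C i (j+2)"
      proof (cases "j + 2 = k")
        case True then show ?thesis using zk by simp
      next
        case False
        then have "j + 2 \<notin> Z" using no k2 by auto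
        then show ?thesis using Ci[of "j+2"] k2 zk by auto
      qed
      have "\<not> C (i+1) (j+1)" using F2[OF R i(1) i(2), of "j+1"] zj c1 c2 k2 zk by auto
      then show False using zj by simp
    qed
  qed
  have A: "\<forall>j\<in>Z'. \<exists>x\<in>Z. x<j" if a: "C (i+1) 2"
  proof
    fix j assume j: "j \<in> Z'"
    have zj: "2 \<le> j \<and> j + 1 \<le> n \<and> C (i+1) (j-1) \<and> C (i+1) (j+1) \<and> C i j" using z' j by blast
    have "j \<noteq> 2" using j a inZ' by auto
    then have j3: "3 \<le> j" using zj by auto
    show "\<exists>x\<in>Z. x<j"
    proof (rule ccontr)
      assume no: "\<not> (\<exists>x\<in>Z. x<j)"
      have "j - 1 \<notin> Z" "j - 2 \<notin> Z" using no j3 by auto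
      then have c1: "C i (j-1)" and c2: "C i (j-2)" using Ci[of "j-1"] Ci[of "j-2"] j3 zj by auto
      have e: "j - 1 - 1 = j - 2" "j - 1 + 1 = j" using j3 by auto
      have f: "2 \<le> j-1" "j-1+1 \<le> n" "C i (j-1-1)" "C i (j-1+1)" using e j3 zj c1 c2 by auto
      have "\<not> C (i+1) (j-1)" by (rule F2[OF R i(1) i(2) f(1) f(2) f(3) c1 f(4)])
      then show False using zj by simp
    qed
  qed
  have B: "\<forall>j\<in>Z'. \<exists>x\<in>Z. j<x" if b: "C (i+1) (n-1)"
  proof
    fix j assume j: "j \<in> Z'"
    have zj: "2 \<le> j \<and> j + 1 \<le> n \<and> C (i+1) (j-1) \<and> C (i+1) (j+1) \<and> C i j" using z' j by blast
    have "j \<noteq> n - 1" using j b inZ' by auto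
    then have j3: "j + 2 \<le> n" using zj by auto
    show "\<exists>x\<in>Z. j<x"
    proof (rule ccontr)
      assume no: "\<not> (\<exists>x\<in>Z. j<x)"
      have "j + 1 \<notin> Z" "j + 2 \<notin> Z" using no j3 by auto
      then have c1: "C i (j+1)" and c2: "C i (j+2)" using Ci[of "j+1"] Ci[of "j+2"] j3 zj by auto
      have "\<not> C (i+1) (j+1)" using F2[OF R i(1) i(2), of "j+1"] zj c1 c2 j3 by auto
      then show False using zj by simp
    qed
  qed
  have n2: "\<not> C i 2 \<Longrightarrow> C (i+1) 2 \<and> 2 \<in> Z" using F1[OF R i(1) _, of 2] i n3 inZ by auto
  have nn: "\<not> C i (n-1) \<Longrightarrow> C (i+1) (n-1) \<and> n-1 \<in> Z" using F1[OF R i(1) _, of "n-1"] i n3 inZ by auto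
  have cardpos: "x \<in> Z \<Longrightarrow> 1 \<le> card Z" for x using fZ(1) by (metis One_nat_def Suc_leI card_gt_0_iff empty_iff)
  show ?thesis
  proof (cases "Z' = {}")
    case True
    then show ?thesis unfolding phi_def Z'_def[symmetric] Z_def[symmetric]
      using n2 nn cardpos by auto
  next
    case False
    have main: "card Z' + (if C (i+1) 2 then 1 else 0) + (if C (i+1) (n-1) then 1 else 0) \<le> card Z + 1"
      by (rule count_gap[OF fZ False gap A B]) auto
    show ?thesis unfolding phi_def Z'_def[symmetric] Z_def[symmetric]
      using main n2 nn by (auto split: if_splits)
  qed
qed

lemma chain:
  assumes R: "resistant m n C" and i: "1 \<le> i" and n3: "3 \<le> n"
  shows "i + d + 1 \<le> m \<Longrightarrow> phi n C (i + d) \<le> phi n C i"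
proof (induction d)
  case 0 then show ?case by simp
next
  case (Suc d)
  have "phi n C (i + d + 1) \<le> phi n C (i + d)"
    by (rule step[OF R _ _ n3]) (use i Suc.prems in auto)
  then show ?case using Suc by simp
qed

lemma split_count: "row_count n C i + card (Zs n C i) = n"
proof -
  have "{1..n} = {j\<in>{1..n}. C i j} \<union> Zs n C i" unfolding Zs_def by auto
  moreover have "{j\<in>{1..n}. C i j} \<inter> Zs n C i = {}" unfolding Zs_def by auto
  ultimately have "card {1..n} = card {j\<in>{1..n}. C i j} + card (Zs n C i)"
    by (metis card_Un_disjoint finite_Un finite_atLeastAtMost)
  then show ?thesis unfolding row_count_def by simp
qed

theorem mainTheorem8:
  fixes m n r :: nat and C :: "nat \<Rightarrow> nat \<Rightarrow> bool"
  assumes "resistant m n C"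
    and "m \<ge> 2"
    and "row_count n C (m - 1) = r"
  shows "\<forall>i. 1 \<le> i \<and> i \<le> m - 2 \<longrightarrow> row_count n C i \<le> r + 1"
proof (intro allI impI)
  fix i assume i: "1 \<le> i \<and> i \<le> m - 2"
  have key: "card (Zs n C (m - 1)) \<le> card (Zs n C i) + 1"
  proof (cases "3 \<le> n")
    case True
    have "phi n C (i + (m - 1 - i)) \<le> phi n C i"
      by (rule chain[OF assms(1) _ True]) (use i assms(2) in auto)
    moreover have "i + (m - 1 - i) = m - 1" using i assms(2) by auto
    ultimately have "phi n C (m - 1) \<le> phi n C i" by simp
    then show ?thesis unfolding phi_def by (auto split: if_splits)
  next
    case False
    have "Zs n C (m - 1) = {}"
    proof (rule ccontr)
      assume "Zs n C (m - 1) \<noteq> {}"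
      then obtain j where "j \<in> Zs n C (m - 1)" by auto
      then have "1 \<le> j" "j \<le> n" "\<not> C (m-1) j" unfolding Zs_def by auto
      then have "2 \<le> j \<and> j + 1 \<le> n" using F1[OF assms(1), of "m-1" j] assms(2) by auto
      then show False using False by auto
    qed
    then show ?thesis by simp
  qed
  show "row_count n C i \<le> r + 1"
    using key split_count[of n C i] split_count[of n C "m-1"] assms(3) by linarith
qed

end
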